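(* For every nonempty $J\subseteq\{1,\ldots,n\}$, the Laurent polynomial $q_J=t^{-\omega_J}\Delta_J(\tilde tZ)$ lies in $\mathbb{C}[z,t]$; its specialization at $t=0$ is $\pm$ the antidiagonal term of $p_J=\Delta_J(Z)$, its specialization at $t=1$ is $p_J$, and $q_J$ is invariant under the action of the subgroup $U\subseteq B$ of lower triangular unipotent matrices on $M_n\times\mathbb{C}$, i.e. $q_J(\Psi_\tau(u)\cdot Z,\tau)=q_J(Z,\tau)$ for all $u\in U$, $Z\in M_n$, $\tau\in\mathbb{C}$.
   Context: $M_n$ is the space of complex $n\times n$ matrices with coordinate ring $\mathbb{C}[z]=\mathbb{C}[z_{ij}:1\le i,j\le n]$; $Z=(z_{ij})$ is the generic matrix. $\omega_{ij}=3^{\,n-i-j}$ if $i+j\le n$ and $\omega_{ij}=0$ otherwise. $\tilde tZ$ denotes the matrix with entries $t^{\omega_{ij}}z_{ij}$. For $J=\{j_1<\cdots<j_k\}$, $\Delta_J(Z)$ is the minor with rows $1,\ldots,k$ and columns $J$, and $\omega_J=\sum_{r=1}^k\omega_{r,j_{k+1-r}}$ is the sum of the weights along the antidiagonal of the square submatrix of $\omega$ with rows $1,\ldots,k$ and columns $J$. $B$ is the group of invertible lower triangular matrices, acting on $M_n\times\mathbb{C}$ by $b\cdot(Z,\tau)=(\Psi_\tau(b)\cdot Z,\tau)$, where $\Psi_\tau(b)=(\tilde\tau_1^{-1}b\tilde\tau_1,\ldots,\tilde\tau_n^{-1}b\tilde\tau_n)$ with $\tilde\tau_j=\mathrm{diag}(\tau^{\omega_{1j}},\ldots,\tau^{\omega_{nj}})$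 for $\tau\ne0$, and for $\tau=0$, $\Psi_0(b)=(b_1,\ldots,b_n)$ with $b_j$ equal to $b$ with all entries in columns $1,\ldots,n-j$ strictly below the diagonal set to $0$; an $n$-tuple $(g_1,\ldots,g_n)$ of matrices acts on $Z$ columnwise, sending the $j$-th column $Z_j$ to $g_jZ_j$. *)

theory Defs
  imports Complex_Main "HOL-Combinatorics.Permutations"
begin

text \<open>Matrices in M_n are functions nat => nat => complex; only the entries with
  indices in {1..n} are used (1-based indexing as in the paper).\<close>

type_synonym cmat = "nat \<Rightarrow> nat \<Rightarrow> complex"

definition omega :: "nat \<Rightarrow> nat \<Rightarrow> nat \<Rightarrow> nat" where
  "omega n i j = (if i + j \<le> n then 3 ^ (n - i - j) else 0)"

definition jth :: "nat set \<Rightarrow> nat \<Rightarrow> nat" where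
  "jth J r = sorted_list_of_set J ! (r - 1)"

definition ldet :: "nat \<Rightarrow> cmat \<Rightarrow> complex" where
  "ldet k A = (\<Sum>\<sigma> | \<sigma> permutes {1..k}. of_int (sign \<sigma>) * (\<Prod>r\<in>{1..k}. A r (\<sigma> r)))"

definition Delta :: "nat set \<Rightarrow> cmat \<Rightarrow> complex" where
  "Delta J Z = ldet (card J) (\<lambda>r s. Z r (jth J s))"

definition antidiag_term :: "nat set \<Rightarrow> cmat \<Rightarrow> complex" where
  "antidiag_term J Z = (let k = card J; \<rho> = (\<lambda>r. if r \<in> {1..k} then k + 1 - r else r) in
     of_int (sign \<rho>) * (\<Prod>r\<in>{1..k}. Z r (jth J (\<rho> r))))"

definition omegaJ :: "nat \<Rightarrow> nat set \<Rightarrow> nat" where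
  "omegaJ n J = (\<Sum>r\<in>{1..card J}. omega n r (jth J (card J + 1 - r)))"

definition ttilde :: "nat \<Rightarrow> complex \<Rightarrow> cmat \<Rightarrow> cmat" where
  "ttilde n \<tau> Z = (\<lambda>i j. \<tau> ^ omega n i j * Z i j)"

text \<open>Psi_tau(b) = (b_1,...,b_n); Psi n tau b j is the matrix b_j.\<close>
definition Psi :: "nat \<Rightarrow> complex \<Rightarrow> cmat \<Rightarrow> nat \<Rightarrow> cmat" where
  "Psi n \<tau> b j = (if \<tau> \<noteq> 0
     then (\<lambda>i l. inverse (\<tau> ^ omega n i j) * b i l * \<tau> ^ omega n l j)
     else (\<lambda>i l. if l \<le> n - j \<and> l < i then 0 else b i l))"

definition col_act :: "nat \<Rightarrow> (nat \<Rightarrow> cmat) \<Rightarrow> cmat \<Rightarrow> cmat" where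
  "col_act n g Z = (\<lambda>i j. \<Sum>l\<in>{1..n}. g j i l * Z l j)"

definition B_act :: "nat \<Rightarrow> complex \<Rightarrow> cmat \<Rightarrow> cmat \<Rightarrow> cmat" where
  "B_act n \<tau> b Z = col_act n (Psi n \<tau> b) Z"

definition unipotent_lower :: "nat \<Rightarrow> cmat set" where
  "unipotent_lower n = {u. (\<forall>i\<in>{1..n}. u i i = 1) \<and> (\<forall>i\<in>{1..n}. \<forall>l\<in>{1..n}. i < l \<longrightarrow> u i l = 0)}"

text \<open>Polynomial functions on M_n x C, i.e. elements of C[z,t] viewed as functions:
  finite linear combinations of monomials prod z_ij^a_ij * t^e with natural exponents.\<close>
definition poly_fun :: "nat \<Rightarrow> (cmat \<Rightarrow> complex \<Rightarrow> complex) \<Rightarrow> bool" where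
  "poly_fun n f \<longleftrightarrow> (\<exists>(M :: (((nat \<times> nat) \<Rightarrow> nat) \<times> nat) set) c. finite M \<and>
     (\<forall>Z \<tau>. f Z \<tau> = (\<Sum>m\<in>M. c m * (\<Prod>i\<in>{1..n}. \<Prod>j\<in>{1..n}. Z i j ^ fst m (i, j)) * \<tau> ^ snd m)))"

end

theory Submission imports Defs "Jordan_Normal_Form.Determinant" begin

definition Gw :: "nat \<Rightarrow> nat \<Rightarrow> nat" where
  "Gw n m = (if m \<le> n then 3 ^ (n - m) else 0)"

lemma omega_Gw: "omega n i j = Gw n (i + j)"
  by (simp add: omega_def Gw_def diff_diff_left)

lemma Gw_key:
  assumes "x \<le> n" "x < a" "x < b"
  shows "Gw n a + Gw n b < Gw n x"
proof (cases "x < n")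
  case True
  have ha: "Gw n a \<le> 3 ^ (n - x - 1)"
  proof (cases "a \<le> n")
    case True
    then show ?thesis unfolding Gw_def using assms by (auto intro: power_increasing)
  qed (simp add: Gw_def)
  have hb: "Gw n b \<le> 3 ^ (n - x - 1)"
  proof (cases "b \<le> n")
    case True
    then show ?thesis unfolding Gw_def using assms by (auto intro: power_increasing)
  qed (simp add: Gw_def)
  have "Gw n x = 3 * 3 ^ (n - x - 1)"
    using True by (simp add: Gw_def power_Suc[symmetric] Suc_diff_Suc)
  moreover have "(0::nat) < 3 ^ (n - x - 1)" by simp
  ultimately show ?thesis using ha hb by linarith
next
  case False
  then have "x = n" using assms by simp
  then show ?thesis using assms by (simp add: Gw_def)
qed

definition revp :: "nat \<Rightarrow> nat \<Rightarrow> nat" where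
  "revp k = (\<lambda>r. if r \<in> {1..k} then k + 1 - r else r)"

definition Wt :: "nat \<Rightarrow> (nat \<Rightarrow> nat) \<Rightarrow> nat \<Rightarrow> (nat \<Rightarrow> nat) \<Rightarrow> nat" where
  "Wt n c k \<sigma> = (\<Sum>r\<in>{1..k}. Gw n (r + c (\<sigma> r)))"

lemma sum_two_out:
  assumes "finite A" "a \<in> A" "b \<in> A" "a \<noteq> b"
  shows "sum f A = f a + f b + sum f (A - {a, b})"
proof -
  have "sum f A = f a + sum f (A - {a})" using assms by (simp add: sum.remove)
  also have "sum f (A - {a}) = f b + sum f (A - {a} - {b})"
    using assms by (intro sum.remove) auto
  also have "A - {a} - {b} = A - {a, b}" by auto
  finally show ?thesis by (simp add: add.assoc)
qed

lemma revp_permutes: "revp k permutes {1..k}"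
proof (rule bij_imp_permutes)
  show "bij_betw (revp k) {1..k} {1..k}"
  proof (rule bij_betw_imageI)
    show "inj_on (revp k) {1..k}" by (auto simp: inj_on_def revp_def)
    show "revp k ` {1..k} = {1..k}"
    proof
      show "revp k ` {1..k} \<subseteq> {1..k}" by (auto simp: revp_def)
      show "{1..k} \<subseteq> revp k ` {1..k}"
      proof
        fix x assume x: "x \<in> {1..k}"
        then have "revp k (k + 1 - x) = x" "k + 1 - x \<in> {1..k}" by (auto simp: revp_def)
        then show "x \<in> revp k ` {1..k}" by (metis imageI)
      qed
    qed
  qed
qed (auto simp: revp_def)

lemma weight_min_aux:
  fixes c :: "nat \<Rightarrow> nat"
  assumes mono: "\<And>s s'. 1 \<le> s \<Longrightarrow> s < s' \<Longrightarrow> s' \<le> k \<Longrightarrow> c s < c s'"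
    and bound: "\<And>s. 1 \<le> s \<Longrightarrow> s \<le> k \<Longrightarrow> c s + (k - s) \<le> n"
  shows "card {r\<in>{1..k}. \<sigma> r \<noteq> revp k r} = d \<Longrightarrow> \<sigma> permutes {1..k} \<Longrightarrow> \<sigma> \<noteq> revp k
     \<Longrightarrow> Wt n c k (revp k) < Wt n c k \<sigma>"
proof (induction d arbitrary: \<sigma> rule: less_induct)
  case (less d)
  note perm = less.prems(2)
  define D where "D = {r\<in>{1..k}. \<sigma> r \<noteq> revp k r}"
  have "D \<noteq> {}"
  proof
    assume "D = {}"
    then have "\<sigma> x = revp k x" for x
      using permutes_not_in[OF perm, of x] revp_permutes[of k, THEN permutes_not_in, of x]
      unfolding D_def by (cases "x \<in> {1..k}") auto
    then show False using less.prems(3) by auto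
  qed
  have finD: "finite D" by (simp add: D_def)
  define r0 where "r0 = Min D"
  have r0D: "r0 \<in> D" using finD \<open>D \<noteq> {}\<close> by (simp add: r0_def)
  then have r0k: "r0 \<in> {1..k}" and r0ne: "\<sigma> r0 \<noteq> k + 1 - r0" by (auto simp: D_def revp_def)
  have below: "\<sigma> r = k + 1 - r" if "r \<in> {1..k}" "r < r0" for r
  proof -
    have "r \<notin> D" using that Min_le[OF finD] unfolding r0_def by fastforce
    then show ?thesis using that by (auto simp: D_def revp_def)
  qed
  have s0k: "\<sigma> r0 \<in> {1..k}" using permutes_in_image[OF perm] r0k by blast
  have s0lt: "\<sigma> r0 < k + 1 - r0"
  proof (rule ccontr)
    assume "\<not> ?thesis"
    then have gt: "\<sigma> r0 > k + 1 - r0" using r0ne by simp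
    define r where "r = k + 1 - \<sigma> r0"
    have rk: "r \<in> {1..k}" "r < r0" using gt s0k r0k by (auto simp: r_def)
    have "\<sigma> r = \<sigma> r0" using below[OF rk] s0k by (simp add: r_def)
    then have "r = r0" using permutes_inj[OF perm] by (simp add: inj_eq)
    then show False using rk by simp
  qed
  define r' where "r' = inv_into UNIV \<sigma> (k + 1 - r0)"
  have sr': "\<sigma> r' = k + 1 - r0" unfolding r'_def using perm by (simp add: permutes_inverses(1))
  have r'k: "r' \<in> {1..k}"
  proof -
    have "k + 1 - r0 \<in> {1..k}" using r0k by auto
    then show ?thesis unfolding r'_def using permutes_in_image[OF permutes_inv[OF perm]] by blast
  qed
  have r'ne: "r' \<noteq> r0" using sr' r0ne by auto
  have r'gt: "r0 < r'"
  proof (rule ccontr)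
    assume "\<not> ?thesis"
    then have "r' < r0" using r'ne by simp
    then have "\<sigma> r' = k + 1 - r'" using below r'k by simp
    then show False using sr' r'ne r0k r'k by auto
  qed
  define \<sigma>' where "\<sigma>' = \<sigma> \<circ> Transposition.transpose r0 r'"
  have perm': "\<sigma>' permutes {1..k}"
    unfolding \<sigma>'_def by (rule permutes_compose[OF permutes_swap_id perm]) (use r0k r'k in auto)
  have s'r0: "\<sigma>' r0 = k + 1 - r0" by (simp add: \<sigma>'_def sr')
  have s'r': "\<sigma>' r' = \<sigma> r0" by (simp add: \<sigma>'_def)
  have s'o: "\<sigma>' r = \<sigma> r" if "r \<noteq> r0" "r \<noteq> r'" for r using that by (simp add: \<sigma>'_def)
  define D' where "D' = {r\<in>{1..k}. \<sigma>' r \<noteq> revp k r}"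
  have "D' \<subseteq> D - {r0}"
  proof
    fix r assume r: "r \<in> D'"
    show "r \<in> D - {r0}"
    proof (cases "r = r0")
      case True then show ?thesis using r r0k s'r0 by (auto simp: D'_def revp_def)
    next
      case False
      show ?thesis
      proof (cases "r = r'")
        case True then show ?thesis using False r'k sr' r'ne r0k by (auto simp: D_def revp_def)
      next
        case False2: False
        then show ?thesis using r False s'o by (auto simp: D_def D'_def)
      qed
    qed
  qed
  then have "D' \<subset> D" using r0D by auto
  then have cardlt: "card D' < card D" using finD by (simp add: psubset_card_mono)
  have x_le: "r0 + c (\<sigma> r0) \<le> n"
  proof -
    have "c (\<sigma> r0) < c (k + 1 - r0)" using mono s0k s0lt r0k by auto
    moreover have "c (k + 1 - r0) + (k - (k + 1 - r0)) \<le> n" using r0k by (intro bound) auto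
    ultimately show ?thesis using r0k by auto
  qed
  have a_gt: "r0 + c (\<sigma> r0) < r0 + c (k + 1 - r0)" using mono s0k s0lt r0k by auto
  have b_gt: "r0 + c (\<sigma> r0) < r' + c (\<sigma> r0)" using r'gt by simp
  have key: "Gw n (r0 + c (k + 1 - r0)) + Gw n (r' + c (\<sigma> r0)) < Gw n (r0 + c (\<sigma> r0))"
    by (rule Gw_key[OF x_le a_gt b_gt])
  let ?R = "{1..k} - {r0, r'}"
  have eqR: "(\<Sum>r\<in>?R. Gw n (r + c (\<sigma>' r))) = (\<Sum>r\<in>?R. Gw n (r + c (\<sigma> r)))"
    by (rule sum.cong) (auto simp: s'o)
  have "Wt n c k \<sigma>' = Gw n (r0 + c (\<sigma>' r0)) + Gw n (r' + c (\<sigma>' r')) + (\<Sum>r\<in>?R. Gw n (r + c (\<sigma>' r)))"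
    unfolding Wt_def by (rule sum_two_out) (use r0k r'k r'ne in auto)
  moreover have "Wt n c k \<sigma> = Gw n (r0 + c (\<sigma> r0)) + Gw n (r' + c (\<sigma> r')) + (\<Sum>r\<in>?R. Gw n (r + c (\<sigma> r)))"
    unfolding Wt_def by (rule sum_two_out) (use r0k r'k r'ne in auto)
  ultimately have Wlt: "Wt n c k \<sigma>' < Wt n c k \<sigma>" using key eqR s'r0 s'r' by simp
  show ?case
  proof (cases "\<sigma>' = revp k")
    case True then show ?thesis using Wlt by simp
  next
    case False
    have "card D' < d" using cardlt less.prems(1) by (simp add: D_def)
    then have "Wt n c k (revp k) < Wt n c k \<sigma>'"
      using less.IH[OF _ _ perm' False] by (simp add: D'_def)
    then show ?thesis using Wlt by simp
  qed
qed


lemma sum_shift1: "(\<Sum>l\<in>{1..k}. f l) = (\<Sum>l\<in>{0..<k}. f (Suc l))"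
  by (rule sum.reindex_cong[where l=Suc]) (auto simp: image_iff Suc_le_eq intro: exI[of _ "x - 1" for x])

lemma prod_shift1: "(\<Prod>l\<in>{1..k}. f l) = (\<Prod>l\<in>{0..<k}. f (Suc l))"
  by (rule prod.reindex_cong[where l=Suc]) (auto simp: image_iff Suc_le_eq intro: exI[of _ "x - 1" for x])

lemma pb1: "p permutes {0..<k} \<Longrightarrow> permutes_bij_finite p {0..<k} {1..k} Suc (\<lambda>x. x - 1)"
  by unfold_locales (auto simp: bij_betw_def image_Suc_atLeastLessThan atLeastLessThanSuc_atLeastAtMost)

lemma pb2: "p permutes {1..k} \<Longrightarrow> permutes_bij_finite p {1..k} {0..<k} (\<lambda>x. x - 1) Suc"
proof unfold_locales
  show "bij_betw (\<lambda>x. x - 1) {1..k} {0..<k}"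
  proof (rule bij_betw_imageI)
    show "inj_on (\<lambda>x. x - 1) {1..k}" by (auto simp: inj_on_def)
    show "(\<lambda>x. x - 1) ` {1..k} = {0..<k}"
    proof
      show "{0..<k} \<subseteq> (\<lambda>x. x - 1) ` {1..k}"
      proof
        fix x assume "x \<in> {0..<k}"
        then have "Suc x \<in> {1..k}" "x = Suc x - 1" by auto
        then show "x \<in> (\<lambda>x. x - 1) ` {1..k}" by blast
      qed
    qed auto
  qed
qed auto

lemma ldet_jnf: "ldet k A = det (mat k k (\<lambda>(i,j). A (Suc i) (Suc j)))"
proof -
  have "det (mat k k (\<lambda>(i,j). A (Suc i) (Suc j))) =
     (\<Sum>p\<in>{p. p permutes {0..<k}}. of_int (sign p) * (\<Prod>i\<in>{0..<k}. A (Suc i) (Suc (p i))))"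
    unfolding det_def
    by (auto intro!: sum.cong prod.cong simp: permutes_in_image)
  also have "\<dots> = ldet k A"
    unfolding ldet_def
  proof (rule sum.reindex_bij_witness[where i = "\<lambda>\<sigma> x. if x \<in> {0..<k} then \<sigma> (Suc x) - 1 else x"
        and j = "\<lambda>p x. if x \<in> {1..k} then Suc (p (x - 1)) else x"])
    fix p assume "p \<in> {p. p permutes {0..<k}}"
    then have perm: "p permutes {0..<k}" by simp
    have im: "p x \<in> {0..<k}" if "x \<in> {0..<k}" for x using permutes_in_image[OF perm] that by blast
    show "(\<lambda>x. if x \<in> {0..<k} then (if Suc x \<in> {1..k} then Suc (p (Suc x - 1)) else Suc x) - 1 else x) = p"
    proof (rule ext)
      fix x show "(if x \<in> {0..<k} then (if Suc x \<in> {1..k} then Suc (p (Suc x - 1)) else Suc x) - 1 else x) = p x"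
        using im[of x] permutes_not_in[OF perm, of x] by auto
    qed
    interpret P: permutes_bij_finite p "{0..<k}" "{1..k}" Suc "\<lambda>x. x - 1"
       "\<lambda>x. if x \<in> {1..k} then Suc (p (x - 1)) else x"
      using pb1[OF perm] by simp_all
    show "(\<lambda>x. if x \<in> {1..k} then Suc (p (x - 1)) else x) \<in> {\<sigma>. \<sigma> permutes {1..k}}"
      using P.permutes_p' by simp
    have "sign (\<lambda>x. if x \<in> {1..k} then Suc (p (x - 1)) else x) = sign p"
      by (rule P.sign_p')
    moreover have "(\<Prod>r\<in>{1..k}. A r (if r \<in> {1..k} then Suc (p (r - 1)) else r))
        = (\<Prod>i\<in>{0..<k}. A (Suc i) (Suc (p i)))"
      unfolding prod_shift1 by (intro prod.cong) auto
    ultimately show "of_int (sign (\<lambda>x. if x \<in> {1..k} then Suc (p (x - 1)) else x)) *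
        (\<Prod>r\<in>{1..k}. A r ((\<lambda>x. if x \<in> {1..k} then Suc (p (x - 1)) else x) r)) =
        of_int (sign p) * (\<Prod>i\<in>{0..<k}. A (Suc i) (Suc (p i)))" by simp
  next
    fix \<sigma> assume "\<sigma> \<in> {\<sigma>. \<sigma> permutes {1..k}}"
    then have perm: "\<sigma> permutes {1..k}" by simp
    have im: "\<sigma> x \<in> {1..k}" if "x \<in> {1..k}" for x using permutes_in_image[OF perm] that by blast
    show "(\<lambda>x. if x \<in> {1..k} then Suc ((if x - 1 \<in> {0..<k} then \<sigma> (Suc (x - 1)) - 1 else x - 1)) else x) = \<sigma>"
    proof (rule ext)
      fix x show "(if x \<in> {1..k} then Suc ((if x - 1 \<in> {0..<k} then \<sigma> (Suc (x - 1)) - 1 else x - 1)) else x) = \<sigma> x"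
        using im[of x] permutes_not_in[OF perm, of x] by auto
    qed
    interpret P: permutes_bij_finite \<sigma> "{1..k}" "{0..<k}" "\<lambda>x. x - 1" Suc
       "\<lambda>x. if x \<in> {0..<k} then \<sigma> (Suc x) - 1 else x"
      using pb2[OF perm] by simp_all
    show "(\<lambda>x. if x \<in> {0..<k} then \<sigma> (Suc x) - 1 else x) \<in> {p. p permutes {0..<k}}"
      using P.permutes_p' by simp
  qed
  finally show ?thesis by simp
qed


lemma ldet_cong:
  assumes "\<And>r s. r \<in> {1..k} \<Longrightarrow> s \<in> {1..k} \<Longrightarrow> A r s = A' r s"
  shows "ldet k A = ldet k A'"
  unfolding ldet_def
proof (rule sum.cong[OF refl])
  fix \<sigma> assume "\<sigma> \<in> {\<sigma>. \<sigma> permutes {1..k}}"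
  then have perm: "\<sigma> permutes {1..k}" by simp
  have "(\<Prod>r\<in>{1..k}. A r (\<sigma> r)) = (\<Prod>r\<in>{1..k}. A' r (\<sigma> r))"
  proof (rule prod.cong[OF refl])
    fix r assume r: "r \<in> {1..k}"
    then have "\<sigma> r \<in> {1..k}" using permutes_in_image[OF perm] by blast
    then show "A r (\<sigma> r) = A' r (\<sigma> r)" using r by (rule assms[rotated])
  qed
  then show "of_int (sign \<sigma>) * (\<Prod>r\<in>{1..k}. A r (\<sigma> r)) = of_int (sign \<sigma>) * (\<Prod>r\<in>{1..k}. A' r (\<sigma> r))"
    by simp
qed


lemma ldet_lower:
  assumes d: "\<And>r. r \<in> {1..k} \<Longrightarrow> U r r = 1"
    and z: "\<And>r l. r \<in> {1..k} \<Longrightarrow> l \<in> {1..k} \<Longrightarrow> r < l \<Longrightarrow> U r l = 0"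
  shows "ldet k (\<lambda>r s. \<Sum>l\<in>{1..k}. U r l * A l s) = ldet k A"
proof -
  define MU where "MU = mat k k (\<lambda>(i,j). U (Suc i) (Suc j))"
  define MA where "MA = mat k k (\<lambda>(i,j). A (Suc i) (Suc j))"
  have MU: "MU \<in> carrier_mat k k" and MA: "MA \<in> carrier_mat k k" by (auto simp: MU_def MA_def)
  have prod: "mat k k (\<lambda>(i,j). \<Sum>l\<in>{1..k}. U (Suc i) l * A l (Suc j)) = MU * MA"
  proof (rule eq_matI)
    fix i j assume ij: "i < dim_row (MU * MA)" "j < dim_col (MU * MA)"
    then have i: "i < k" and j: "j < k" using MU MA by auto
    have "(MU * MA) $$ (i, j) = row MU i \<bullet> col MA j" using i j MU MA by simp
    also have "\<dots> = (\<Sum>l\<in>{0..<k}. MU $$ (i, l) * MA $$ (l, j))"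
      unfolding scalar_prod_def using i j MU MA by (intro sum.cong) auto
    also have "\<dots> = (\<Sum>l\<in>{0..<k}. U (Suc i) (Suc l) * A (Suc l) (Suc j))"
      using i j by (intro sum.cong) (auto simp: MU_def MA_def)
    also have "\<dots> = (\<Sum>l\<in>{1..k}. U (Suc i) l * A l (Suc j))"
      by (rule sum_shift1[symmetric])
    finally show "mat k k (\<lambda>(i,j). \<Sum>l\<in>{1..k}. U (Suc i) l * A l (Suc j)) $$ (i, j) = (MU * MA) $$ (i, j)"
      using i j by simp
  qed (use MU MA in auto)
  have "det MU = prod_list (diag_mat MU)"
  proof (rule det_lower_triangular[OF _ MU])
    fix i j :: nat assume "i < j" "j < k"
    then show "MU $$ (i, j) = 0" unfolding MU_def by (simp add: z)
  qed
  also have "diag_mat MU = replicate k 1"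
  proof (rule nth_equalityI)
    show "length (diag_mat MU) = length (replicate k 1)" using MU by (simp add: diag_mat_def)
    fix i assume "i < length (diag_mat MU)"
    then have "i < k" using MU by (simp add: diag_mat_def)
    then show "diag_mat MU ! i = replicate k 1 ! i" by (simp add: diag_mat_def MU_def d)
  qed
  finally have "det MU = 1" by simp
  have "ldet k (\<lambda>r s. \<Sum>l\<in>{1..k}. U r l * A l s) = det (MU * MA)"
    unfolding ldet_jnf prod by simp
  also have "\<dots> = det MA" using det_mult[OF MU MA] \<open>det MU = 1\<close> by simp
  finally show ?thesis unfolding ldet_jnf MA_def .
qed


lemma jth_in:
  assumes "finite J" "s \<in> {1..card J}"
  shows "jth J s \<in> J"
proof -
  have "s - 1 < length (sorted_list_of_set J)" using assms by auto
  then have "sorted_list_of_set J ! (s - 1) \<in> set (sorted_list_of_set J)" by (rule nth_mem)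
  then show ?thesis using assms by (simp add: jth_def)
qed

lemma jth_mono:
  assumes "finite J" "1 \<le> s" "s < s'" "s' \<le> card J"
  shows "jth J s < jth J s'"
proof -
  have "sorted_wrt (<) (sorted_list_of_set J)" by simp
  moreover have "s - 1 < s' - 1" "s' - 1 < length (sorted_list_of_set J)" using assms by auto
  ultimately have "sorted_list_of_set J ! (s - 1) < sorted_list_of_set J ! (s' - 1)"
    by (rule sorted_wrt_nth_less)
  then show ?thesis by (simp add: jth_def)
qed

lemma jth_bound:
  assumes "finite J" "J \<subseteq> {1..n}" "1 \<le> s" "s \<le> card J"
  shows "jth J s + (card J - s) \<le> n"
proof -
  have "\<forall>s. 1 \<le> s \<and> s \<le> card J \<and> card J - s = d \<longrightarrow> jth J s + (card J - s) \<le> jth J (card J)" for d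
  proof (induction d)
    case 0
    then show ?case by auto
  next
    case (Suc d)
    show ?case
    proof (intro allI impI)
      fix s assume s: "1 \<le> s \<and> s \<le> card J \<and> card J - s = Suc d"
      then have "Suc s \<le> card J" "card J - Suc s = d" by auto
      then have "jth J (Suc s) + d \<le> jth J (card J)" using Suc.IH[rule_format, of "Suc s"] by auto
      moreover have "jth J s < jth J (Suc s)" using s assms(1) by (intro jth_mono) auto
      ultimately show "jth J s + (card J - s) \<le> jth J (card J)" using s \<open>card J - Suc s = d\<close> by linarith
    qed
  qed
  then have "jth J s + (card J - s) \<le> jth J (card J)" using assms by blast
  moreover have "jth J (card J) \<in> J" using assms by (intro jth_in) auto
  ultimately show ?thesis using assms by auto
qed

lemma poly_fun_zero: "poly_fun n (\<lambda>Z \<tau>. 0)"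
  unfolding poly_fun_def by (rule exI[of _ "{}"]) simp

lemma poly_fun_add:
  assumes "poly_fun n f" "poly_fun n g"
  shows "poly_fun n (\<lambda>Z \<tau>. f Z \<tau> + g Z \<tau>)"
proof -
  obtain M1 c1 where M1: "finite M1" "\<And>Z \<tau>. f Z \<tau> = (\<Sum>m\<in>M1. c1 m * (\<Prod>i\<in>{1..n}. \<Prod>j\<in>{1..n}. Z i j ^ fst m (i, j)) * \<tau> ^ snd m)"
    using assms(1) unfolding poly_fun_def by blast
  obtain M2 c2 where M2: "finite M2" "\<And>Z \<tau>. g Z \<tau> = (\<Sum>m\<in>M2. c2 m * (\<Prod>i\<in>{1..n}. \<Prod>j\<in>{1..n}. Z i j ^ fst m (i, j)) * \<tau> ^ snd m)"
    using assms(2) unfolding poly_fun_def by blast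
  define X where "X = (\<lambda>Z \<tau> m. (\<Prod>i\<in>{1..n}. \<Prod>j\<in>{1..n}. (Z i j :: complex) ^ fst m (i, j)) * (\<tau>::complex) ^ snd m)"
  define c where "c m = (if m \<in> M1 then c1 m else 0) + (if m \<in> M2 then c2 m else 0)" for m
  have fin: "finite (M1 \<union> M2)" using M1 M2 by simp
  have "f Z \<tau> + g Z \<tau> = (\<Sum>m\<in>M1 \<union> M2. c m * (\<Prod>i\<in>{1..n}. \<Prod>j\<in>{1..n}. Z i j ^ fst m (i, j)) * \<tau> ^ snd m)" for Z \<tau>
  proof -
    have e1: "f Z \<tau> = (\<Sum>m\<in>M1 \<union> M2. (if m \<in> M1 then c1 m * X Z \<tau> m else 0))"
    proof -
      have "f Z \<tau> = (\<Sum>m\<in>(M1 \<union> M2) \<inter> M1. c1 m * X Z \<tau> m)"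
        unfolding M1(2) X_def by (intro sum.cong) (auto simp: mult.assoc)
      also have "\<dots> = (\<Sum>m\<in>M1 \<union> M2. (if m \<in> M1 then c1 m * X Z \<tau> m else 0))"
        by (rule sum.inter_restrict[OF fin])
      finally show ?thesis .
    qed
    have e2: "g Z \<tau> = (\<Sum>m\<in>M1 \<union> M2. (if m \<in> M2 then c2 m * X Z \<tau> m else 0))"
    proof -
      have "g Z \<tau> = (\<Sum>m\<in>(M1 \<union> M2) \<inter> M2. c2 m * X Z \<tau> m)"
        unfolding M2(2) X_def by (intro sum.cong) (auto simp: mult.assoc)
      also have "\<dots> = (\<Sum>m\<in>M1 \<union> M2. (if m \<in> M2 then c2 m * X Z \<tau> m else 0))"
        by (rule sum.inter_restrict[OF fin])
      finally show ?thesis .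
    qed
    show ?thesis unfolding e1 e2 sum.distrib[symmetric]
      by (intro sum.cong) (auto simp: c_def X_def algebra_simps)
  qed
  then show ?thesis unfolding poly_fun_def using fin by blast
qed

lemma poly_fun_sum:
  assumes "finite S" "\<And>x. x \<in> S \<Longrightarrow> poly_fun n (f x)"
  shows "poly_fun n (\<lambda>Z \<tau>. \<Sum>x\<in>S. f x Z \<tau>)"
  using assms
proof (induction S rule: finite_induct)
  case empty
  then show ?case using poly_fun_zero by simp
next
  case (insert x F)
  then have "poly_fun n (\<lambda>Z \<tau>. f x Z \<tau> + (\<Sum>x\<in>F. f x Z \<tau>))"
    by (intro poly_fun_add) auto
  then show ?case using insert by simp
qed

lemma poly_fun_mono:
  assumes "k \<le> n" "\<And>r. r \<in> {1..k} \<Longrightarrow> cl r \<in> {1..n}"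
  shows "poly_fun n (\<lambda>Z \<tau>. a * \<tau> ^ d * (\<Prod>r\<in>{1..k}. Z r (cl r)))"
proof -
  define e where "e = (\<lambda>(i, j). if i \<in> {1..k} \<and> j = cl i then 1 else (0::nat))"
  have inner: "(\<Prod>j\<in>{1..n}. Z i j ^ e (i, j)) = (if i \<in> {1..k} then Z i (cl i) else 1)" for Z :: cmat and i
  proof (cases "i \<in> {1..k}")
    case True
    then have iT: "1 \<le> i" "Suc 0 \<le> i" "0 < i" "i \<le> k" by auto
    have "(\<Prod>j\<in>{1..n}. Z i j ^ e (i, j)) = (\<Prod>j\<in>{1..n}. if j = cl i then Z i j else 1)"
      by (intro prod.cong) (auto simp: e_def iT)
    also have "\<dots> = Z i (cl i)" using assms(2)[OF True] by (simp add: prod.delta')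
    moreover have "(if i \<in> {1..k} then Z i (cl i) else 1) = Z i (cl i)" using True by (rule if_P)
    ultimately show ?thesis by simp
  next
    case False
    then have "e (i, j) = 0" for j by (auto simp: e_def)
    then show ?thesis using False by auto
  qed
  have main: "(\<Prod>i\<in>{1..n}. \<Prod>j\<in>{1..n}. Z i j ^ e (i, j)) = (\<Prod>r\<in>{1..k}. Z r (cl r))" for Z :: cmat
  proof -
    have "(\<Prod>i\<in>{1..n}. \<Prod>j\<in>{1..n}. Z i j ^ e (i, j)) = (\<Prod>i\<in>{1..n}. if i \<in> {1..k} then Z i (cl i) else 1)"
      by (rule prod.cong[OF refl]) (rule inner)
    also have "\<dots> = (\<Prod>i\<in>{1..n} \<inter> {1..k}. Z i (cl i))"
      by (rule prod.inter_restrict[symmetric]) simp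
    also have "{1..n} \<inter> {1..k} = {1..k}" using assms(1) by auto
    finally show ?thesis .
  qed
  show ?thesis unfolding poly_fun_def
    by (rule exI[of _ "{(e, d)}"], rule exI[of _ "\<lambda>_. a"]) (use main in simp)
qed


lemma Delta_unip:
  assumes J: "finite J" "J \<subseteq> {1..n}" and u: "u \<in> unipotent_lower n"
  shows "Delta J (\<lambda>i j. \<Sum>l\<in>{1..n}. u i l * M l j) = Delta J M"
proof -
  have kn: "card J \<le> n" using J card_mono[of "{1..n}" J] by auto
  have "Delta J (\<lambda>i j. \<Sum>l\<in>{1..n}. u i l * M l j) = ldet (card J) (\<lambda>r s. \<Sum>l\<in>{1..card J}. u r l * M l (jth J s))"
    unfolding Delta_def
  proof (rule ldet_cong)
    fix r s assume r: "r \<in> {1..card J}" and s: "s \<in> {1..card J}"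
    show "(\<Sum>l\<in>{1..n}. u r l * M l (jth J s)) = (\<Sum>l\<in>{1..card J}. u r l * M l (jth J s))"
    proof (rule sum.mono_neutral_right)
      show "{1..card J} \<subseteq> {1..n}" using kn by auto
      show "\<forall>l\<in>{1..n} - {1..card J}. u r l * M l (jth J s) = 0"
        using u r kn unfolding unipotent_lower_def by auto
    qed simp
  qed
  also have "\<dots> = ldet (card J) (\<lambda>r s. M r (jth J s))"
    by (rule ldet_lower) (use u kn in \<open>auto simp: unipotent_lower_def\<close>)
  finally show ?thesis unfolding Delta_def .
qed

lemma ttilde_B_act:
  assumes "\<tau> \<noteq> 0"
  shows "ttilde n \<tau> (B_act n \<tau> u Z) = (\<lambda>i j. \<Sum>l\<in>{1..n}. u i l * ttilde n \<tau> Z l j)"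
proof (intro ext)
  fix i j
  show "ttilde n \<tau> (B_act n \<tau> u Z) i j = (\<Sum>l\<in>{1..n}. u i l * ttilde n \<tau> Z l j)"
    unfolding ttilde_def B_act_def col_act_def Psi_def using assms
    by (simp add: sum_distrib_left field_simps)
qed


theorem mainTheorem3:
  fixes n :: nat and J :: "nat set"
  assumes "J \<noteq> {}" and "J \<subseteq> {1..n}"
  shows "\<exists>q. poly_fun n q
     \<and> (\<forall>Z \<tau>. \<tau> \<noteq> 0 \<longrightarrow> q Z \<tau> = inverse (\<tau> ^ omegaJ n J) * Delta J (ttilde n \<tau> Z))
     \<and> (\<exists>\<epsilon>::complex. (\<epsilon> = 1 \<or> \<epsilon> = -1) \<and> (\<forall>Z. q Z 0 = \<epsilon> * antidiag_term J Z))
     \<and> (\<forall>Z. q Z 1 = Delta J Z)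
     \<and> (\<forall>u\<in>unipotent_lower n. \<forall>Z \<tau>. q (B_act n \<tau> u Z) \<tau> = q Z \<tau>)"
proof -
  have finJ: "finite J" using assms(2) finite_subset by blast
  define k where "k = card J"
  define c where "c = jth J"
  define \<rho> where "\<rho> = revp k"
  define W where "W = Wt n c k"
  have kn: "k \<le> n" unfolding k_def using assms(2) card_mono[of "{1..n}" J] by auto
  have cmono: "\<And>s s'. 1 \<le> s \<Longrightarrow> s < s' \<Longrightarrow> s' \<le> k \<Longrightarrow> c s < c s'"
    unfolding c_def k_def using finJ by (intro jth_mono) auto
  have cbound: "\<And>s. 1 \<le> s \<Longrightarrow> s \<le> k \<Longrightarrow> c s + (k - s) \<le> n"
    unfolding c_def k_def using finJ assms(2) by (intro jth_bound) auto
  have cin: "c s \<in> {1..n}" if "s \<in> {1..k}" for s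
    using jth_in[OF finJ, of s] that assms(2) unfolding c_def k_def by auto
  have \<rho>perm: "\<rho> permutes {1..k}" unfolding \<rho>_def by (rule revp_permutes)
  have Wlt: "W \<rho> < W \<sigma>" if "\<sigma> permutes {1..k}" "\<sigma> \<noteq> \<rho>" for \<sigma>
    unfolding W_def \<rho>_def using weight_min_aux[OF cmono cbound refl that[unfolded \<rho>_def]] by simp
  have Wle: "W \<rho> \<le> W \<sigma>" if "\<sigma> permutes {1..k}" for \<sigma>
    using Wlt[OF that] by (cases "\<sigma> = \<rho>") auto
  have omJ: "omegaJ n J = W \<rho>"
    unfolding omegaJ_def W_def Wt_def \<rho>_def revp_def c_def k_def[symmetric]
    by (intro sum.cong) (auto simp: omega_Gw)
  define q where "q = (\<lambda>Z \<tau>. \<Sum>\<sigma>\<in>{\<sigma>. \<sigma> permutes {1..k}}.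
      of_int (sign \<sigma>) * (\<tau>::complex) ^ (W \<sigma> - W \<rho>) * (\<Prod>r\<in>{1..k}. (Z::cmat) r (c (\<sigma> r))))"
  have Pperm: "finite {\<sigma>. \<sigma> permutes {1..k}}" by (simp add: finite_permutations)
  have P1: "poly_fun n q"
    unfolding q_def
  proof (rule poly_fun_sum[OF Pperm])
    fix \<sigma> assume "\<sigma> \<in> {\<sigma>. \<sigma> permutes {1..k}}"
    then have perm: "\<sigma> permutes {1..k}" by simp
    show "poly_fun n (\<lambda>Z \<tau>. of_int (sign \<sigma>) * \<tau> ^ (W \<sigma> - W \<rho>) * (\<Prod>r\<in>{1..k}. Z r (c (\<sigma> r))))"
    proof (rule poly_fun_mono[OF kn])
      fix r assume "r \<in> {1..k}"
      then have "\<sigma> r \<in> {1..k}" using permutes_in_image[OF perm] by blast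
      then show "c (\<sigma> r) \<in> {1..n}" by (rule cin)
    qed
  qed
  have Delta_eq: "Delta J M = (\<Sum>\<sigma>\<in>{\<sigma>. \<sigma> permutes {1..k}}. of_int (sign \<sigma>) * (\<Prod>r\<in>{1..k}. M r (c (\<sigma> r))))" for M
    unfolding Delta_def ldet_def k_def c_def ..
  have P2: "q Z \<tau> = inverse (\<tau> ^ omegaJ n J) * Delta J (ttilde n \<tau> Z)" if "\<tau> \<noteq> 0" for Z \<tau>
  proof -
    have "inverse (\<tau> ^ omegaJ n J) * Delta J (ttilde n \<tau> Z) =
       (\<Sum>\<sigma>\<in>{\<sigma>. \<sigma> permutes {1..k}}. inverse (\<tau> ^ W \<rho>) * (of_int (sign \<sigma>) * (\<Prod>r\<in>{1..k}. ttilde n \<tau> Z r (c (\<sigma> r)))))"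
      unfolding Delta_eq omJ sum_distrib_left ..
    also have "\<dots> = q Z \<tau>"
      unfolding q_def
    proof (rule sum.cong[OF refl])
      fix \<sigma> assume "\<sigma> \<in> {\<sigma>. \<sigma> permutes {1..k}}"
      then have le: "W \<rho> \<le> W \<sigma>" using Wle by simp
      have "(\<Prod>r\<in>{1..k}. ttilde n \<tau> Z r (c (\<sigma> r))) = (\<Prod>r\<in>{1..k}. \<tau> ^ Gw n (r + c (\<sigma> r))) * (\<Prod>r\<in>{1..k}. Z r (c (\<sigma> r)))"
        unfolding ttilde_def omega_Gw by (rule prod.distrib)
      also have "(\<Prod>r\<in>{1..k}. \<tau> ^ Gw n (r + c (\<sigma> r))) = \<tau> ^ W \<sigma>"
        unfolding W_def Wt_def by (rule power_sum[symmetric])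
      also have "\<tau> ^ W \<sigma> = \<tau> ^ (W \<sigma> - W \<rho>) * \<tau> ^ W \<rho>"
        using le by (simp add: power_add[symmetric])
      finally show "inverse (\<tau> ^ W \<rho>) * (of_int (sign \<sigma>) * (\<Prod>r\<in>{1..k}. ttilde n \<tau> Z r (c (\<sigma> r)))) =
          of_int (sign \<sigma>) * \<tau> ^ (W \<sigma> - W \<rho>) * (\<Prod>r\<in>{1..k}. Z r (c (\<sigma> r)))"
        using that by (simp add: field_simps)
    qed
    finally show ?thesis by simp
  qed
  have P3: "q Z 0 = antidiag_term J Z" for Z
  proof -
    have "q Z 0 = (\<Sum>\<sigma>\<in>{\<sigma>. \<sigma> permutes {1..k}}. if \<sigma> = \<rho> then of_int (sign \<rho>) * (\<Prod>r\<in>{1..k}. Z r (c (\<rho> r))) else 0)"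
      unfolding q_def
    proof (rule sum.cong[OF refl])
      fix \<sigma> assume "\<sigma> \<in> {\<sigma>. \<sigma> permutes {1..k}}"
      then have "\<sigma> \<noteq> \<rho> \<Longrightarrow> W \<sigma> - W \<rho> \<noteq> 0" using Wlt[of \<sigma>] by simp
      then show "of_int (sign \<sigma>) * (0::complex) ^ (W \<sigma> - W \<rho>) * (\<Prod>r\<in>{1..k}. Z r (c (\<sigma> r))) =
         (if \<sigma> = \<rho> then of_int (sign \<rho>) * (\<Prod>r\<in>{1..k}. Z r (c (\<rho> r))) else 0)"
        by auto
    qed
    also have "\<dots> = of_int (sign \<rho>) * (\<Prod>r\<in>{1..k}. Z r (c (\<rho> r)))"
      using \<rho>perm Pperm by (simp add: sum.delta')
    also have "\<dots> = antidiag_term J Z"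
      unfolding antidiag_term_def Let_def \<rho>_def revp_def k_def c_def ..
    finally show ?thesis .
  qed
  have P4: "q Z 1 = Delta J Z" for Z
    unfolding q_def Delta_eq by simp
  have P5: "q (B_act n \<tau> u Z) \<tau> = q Z \<tau>" if u: "u \<in> unipotent_lower n" for u Z \<tau>
  proof (cases "\<tau> = 0")
    case False
    show ?thesis
      unfolding P2[OF False] ttilde_B_act[OF False] Delta_unip[OF finJ assms(2) u] ..
  next
    case True
    have fac: "B_act n 0 u Z r (c (\<rho> r)) = Z r (c (\<rho> r))" if r: "r \<in> {1..k}" for r
    proof -
      define j where "j = c (\<rho> r)"
      have rj: "r + j \<le> n + 1"
      proof -
        have "\<rho> r = k + 1 - r" using r by (simp add: \<rho>_def revp_def)
        moreover have "c (k + 1 - r) + (k - (k + 1 - r)) \<le> n" using r by (intro cbound) auto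
        ultimately show ?thesis using r unfolding j_def by auto
      qed
      have rn: "r \<in> {1..n}" using r kn by auto
      have "B_act n 0 u Z r j = (\<Sum>l\<in>{1..n}. (if l \<le> n - j \<and> l < r then 0 else u r l) * Z l j)"
        unfolding B_act_def col_act_def Psi_def by simp
      also have "\<dots> = (\<Sum>l\<in>{1..n}. if l = r then Z l j else 0)"
      proof (rule sum.cong[OF refl])
        fix l assume l: "l \<in> {1..n}"
        show "(if l \<le> n - j \<and> l < r then 0 else u r l) * Z l j = (if l = r then Z l j else 0)"
        proof (cases "l < r")
          case True
          then have "l \<le> n - j" using rj by auto
          then show ?thesis using True by auto
        next
          case False
          then show ?thesis using u l rn unfolding unipotent_lower_def
            by (cases "l = r") auto
        qed
      qed
      also have "\<dots> = Z r j" using rn by (simp add: sum.delta')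
      finally show ?thesis unfolding j_def .
    qed
    have prodeq: "(\<Prod>r\<in>{1..k}. B_act n 0 u Z r (c (\<rho> r))) = (\<Prod>r\<in>{1..k}. Z r (c (\<rho> r)))"
      by (rule prod.cong[OF refl]) (rule fac)
    have "q (B_act n 0 u Z) 0 = q Z 0"
      unfolding P3 antidiag_term_def Let_def k_def[symmetric] c_def[symmetric]
        revp_def[symmetric] \<rho>_def[symmetric]
      using prodeq by simp
    then show ?thesis using True by simp
  qed
  show ?thesis
    by (rule exI[of _ q]) (use P1 P2 P3 P4 P5 in auto)
qed

end
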